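(* Let $\pi\subset\mathrm{Iso}(\mathbb R^n)$ be a crystallographic group. Then $$\mathcal C_\pi=\mathrm O(n)\cdot \mathrm Z_{\mathsf{GL}(n)}(H_\pi)=\{OP: O\in\mathrm O(n),\ P\in\mathsf{GL}(n,\mathbb R),\ PA=AP\ \forall A\in H_\pi\}.$$
   Context: $\mathrm{Iso}(\mathbb R^n)=\mathrm O(n)\ltimes\mathbb R^n$ with elements $(A,v)$ acting by $x\mapsto Ax+v$; a crystallographic group is a discrete subgroup with compact quotient; $H_\pi=\{A:\exists v,\ (A,v)\in\pi\}\subset\mathrm O(n)$ is its holonomy group. $\mathcal C_\pi=\{A\in\mathsf{GL}(n,\mathbb R):AH_\pi A^{-1}\subset\mathrm O(n)\}$, and $\mathrm Z_{\mathsf{GL}(n)}(H_\pi)$ is the centralizer of $H_\pi$ in $\mathsf{GL}(n,\mathbb R)$. *)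

theory Defs
  imports "HOL-Analysis.Analysis"
begin

text \<open>Isometries of R^n as pairs (A, v), acting by x \<mapsto> A x + v.\<close>

type_synonym 'n iso = "(real^'n^'n) \<times> (real^'n)"

definition Iso :: "'n::finite iso set" where
  "Iso = {(A, v). orthogonal_matrix A}"

definition iso_apply :: "'n::finite iso \<Rightarrow> real^'n \<Rightarrow> real^'n" where
  "iso_apply g x = fst g *v x + snd g"

definition iso_mult :: "'n::finite iso \<Rightarrow> 'n iso \<Rightarrow> 'n iso" where
  "iso_mult g h = (fst g ** fst h, fst g *v snd h + snd g)"

definition iso_one :: "'n::finite iso" where
  "iso_one = (mat 1, 0)"

definition iso_inv :: "'n::finite iso \<Rightarrow> 'n iso" where
  "iso_inv g = (matrix_inv (fst g), - (matrix_inv (fst g) *v snd g))"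

definition iso_subgroup :: "'n::finite iso set \<Rightarrow> bool" where
  "iso_subgroup \<pi> \<longleftrightarrow> \<pi> \<subseteq> Iso \<and> iso_one \<in> \<pi> \<and>
     (\<forall>g\<in>\<pi>. \<forall>h\<in>\<pi>. iso_mult g h \<in> \<pi>) \<and> (\<forall>g\<in>\<pi>. iso_inv g \<in> \<pi>)"

text \<open>Discrete in the topology of Iso(R^n) \<subseteq> M_n(R) \<times> R^n.\<close>
definition discrete_set :: "'n::finite iso set \<Rightarrow> bool" where
  "discrete_set \<pi> \<longleftrightarrow> (\<forall>g\<in>\<pi>. \<exists>e>0. \<forall>h\<in>\<pi>. dist h g < e \<longrightarrow> h = g)"

definition orbit :: "'n::finite iso set \<Rightarrow> real^'n \<Rightarrow> (real^'n) set" where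
  "orbit \<pi> x = (\<lambda>g. iso_apply g x) ` \<pi>"

text \<open>Compact quotient: the orbit space \<pi>\R^n, with the quotient topology
  of the orbit map, is compact.\<close>
definition cocompact :: "'n::finite iso set \<Rightarrow> bool" where
  "cocompact \<pi> \<longleftrightarrow> (\<exists>Y. quotient_map euclidean Y (orbit \<pi>) \<and> compact_space Y)"

definition crystallographic :: "'n::finite iso set \<Rightarrow> bool" where
  "crystallographic \<pi> \<longleftrightarrow> iso_subgroup \<pi> \<and> discrete_set \<pi> \<and> cocompact \<pi>"

definition holonomy :: "'n::finite iso set \<Rightarrow> (real^'n^'n) set" where
  "holonomy \<pi> = {A. \<exists>v. (A, v) \<in> \<pi>}"

definition conj_orth :: "'n::finite iso set \<Rightarrow> (real^'n^'n) set" where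
  "conj_orth \<pi> = {A. invertible A \<and>
      (\<forall>H\<in>holonomy \<pi>. orthogonal_matrix (A ** H ** matrix_inv A))}"

definition GL_centralizer :: "(real^'n^'n) set \<Rightarrow> (real^'n^'n) set" where
  "GL_centralizer H = {P. invertible P \<and> (\<forall>A\<in>H. P ** A = A ** P)}"

end

theory Submission
  imports Defs
begin


lemma sym_dot:
  fixes M :: "real^'n^'n"
  assumes "transpose M = M"
  shows "x \<bullet> (M *v y) = (M *v x) \<bullet> y"
  by (metis assms dot_lmul_matrix vector_transpose_matrix)

lemma eigen_max:
  fixes M :: "real^'n^'n"
  assumes sym: "transpose M = M" and S: "subspace S" and inv: "\<forall>x\<in>S. M *v x \<in> S"
    and ne: "S \<noteq> {0}"
  shows "\<exists>v \<mu>. v \<in> S \<and> v \<noteq> 0 \<and> M *v v = \<mu> *\<^sub>R v \<and> (\<forall>x\<in>S. x \<bullet> (M *v x) \<le> \<mu> * (x \<bullet> x))"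
proof -
  define K where "K = S \<inter> sphere 0 1"
  have cK: "compact K" unfolding K_def
    using closed_subspace[OF S] by (simp add: closed_Int_compact)
  obtain x0 where x0: "x0 \<in> S" "x0 \<noteq> 0" using ne S subspace_0 by blast
  have "x0 /\<^sub>R norm x0 \<in> K" unfolding K_def using x0 S
    by (simp add: subspace_scale)
  hence Kne: "K \<noteq> {}" by blast
  have cont: "continuous_on K (\<lambda>x::real^'n. x \<bullet> (M *v x))"
    by (intro continuous_intros)
  obtain v where vK: "v \<in> K" and vmax: "\<forall>y\<in>K. y \<bullet> (M *v y) \<le> v \<bullet> (M *v v)"
    using continuous_attains_sup[OF cK Kne cont] by blast
  define \<mu> where "\<mu> = v \<bullet> (M *v v)"
  have vS: "v \<in> S" and vn: "norm v = 1" using vK by (auto simp: K_def)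
  have vv: "v \<bullet> v = 1" using vn by (simp add: dot_square_norm)
  have bound: "x \<bullet> (M *v x) \<le> \<mu> * (x \<bullet> x)" if xS: "x \<in> S" for x
  proof (cases "x = 0")
    case True then show ?thesis by simp
  next
    case False
    define u where "u = x /\<^sub>R norm x"
    have "u \<in> K" unfolding K_def u_def using xS S False by (simp add: subspace_scale)
    hence "u \<bullet> (M *v u) \<le> \<mu>" using vmax \<mu>_def by blast
    moreover have "x = norm x *\<^sub>R u" using False by (simp add: u_def)
    hence "x \<bullet> (M *v x) = (norm x)^2 * (u \<bullet> (M *v u))"
      by (metis (no_types, lifting) inner_scaleR_left inner_scaleR_right matrix_vector_mult_scaleR mult.assoc power2_eq_square)
    moreover have "x \<bullet> x = (norm x)^2" by (simp add: dot_square_norm)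
    ultimately show ?thesis by (metis mult.commute mult_right_mono zero_le_power2)
  qed
  define w where "w = \<mu> *\<^sub>R v - M *v v"
  have wS: "w \<in> S" unfolding w_def using S vS inv by (simp add: subspace_diff subspace_scale)
  define c where "c = \<mu> * (w \<bullet> w) - w \<bullet> (M *v w)"
  have c0: "c \<ge> 0" using bound[OF wS] by (simp add: c_def)
  have wMv: "w \<bullet> (M *v v) = v \<bullet> (M *v w)" using sym_dot[OF sym, of v w] by (simp add: inner_commute)
  have eeq: "w \<bullet> w = \<mu> * (v \<bullet> w) - v \<bullet> (M *v w)"
    using sym_dot[OF sym, of v w] by (simp add: w_def inner_diff_left inner_diff_right inner_commute vv algebra_simps)
  have key: "0 \<le> 2 * t * (w \<bullet> w) + t^2 * c" for t
  proof -
    have zS: "v + t *\<^sub>R w \<in> S" using S vS wS by (simp add: subspace_add subspace_scale)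
    have B: "(v + t *\<^sub>R w) \<bullet> (M *v (v + t *\<^sub>R w)) \<le> \<mu> * ((v + t *\<^sub>R w) \<bullet> (v + t *\<^sub>R w))"
      using bound[OF zS] .
    have E1: "(v + t *\<^sub>R w) \<bullet> (M *v (v + t *\<^sub>R w)) = \<mu> + 2*t*(v \<bullet> (M *v w)) + t^2 * (w \<bullet> (M *v w))"
      using wMv by (simp add: matrix_vector_right_distrib matrix_vector_mult_scaleR inner_add_left inner_add_right
          \<mu>_def algebra_simps power2_eq_square)
    have E2: "(v + t *\<^sub>R w) \<bullet> (v + t *\<^sub>R w) = 1 + 2*t*(v \<bullet> w) + t^2 * (w \<bullet> w)"
      using vv by (simp add: inner_add_left inner_add_right inner_commute algebra_simps power2_eq_square)
    have E3: "\<mu> * (1 + 2*t*(v \<bullet> w) + t^2 * (w \<bullet> w)) - (\<mu> + 2*t*(v \<bullet> (M *v w)) + t^2 * (w \<bullet> (M *v w)))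
       = 2 * t * (w \<bullet> w) + t^2 * c"
      unfolding c_def eeq by (simp add: algebra_simps)
    show ?thesis using B unfolding E1 E2 using E3 by linarith
  qed
  have "w \<bullet> w = 0"
  proof (rule ccontr)
    assume ne0: "w \<bullet> w \<noteq> 0"
    hence pos: "w \<bullet> w > 0" by (metis inner_gt_zero_iff inner_zero_left)
    define t where "t = - (w \<bullet> w) / (c + 1)"
    have "0 \<le> 2 * t * (w \<bullet> w) + t^2 * c" by (rule key)
    moreover have "2 * t * (w \<bullet> w) + t^2 * c = (w \<bullet> w)^2 * (- c - 2) / (c+1)^2"
      using c0 by (simp add: t_def field_simps power2_eq_square add_nonneg_eq_0_iff)
    moreover have "(w \<bullet> w)^2 * (- c - 2) / (c+1)^2 < 0"
      using c0 pos by (intro divide_neg_pos mult_pos_neg) auto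
    ultimately show False by linarith
  qed
  hence "M *v v = \<mu> *\<^sub>R v" by (simp add: w_def)
  moreover have "v \<noteq> 0" using vn by auto
  ultimately show ?thesis using vS bound by blast
qed



definition outer :: "real^'n \<Rightarrow> real^'n^'n" where
  "outer v = (\<chi> i j. v$i * v$j)"

lemma outer_mv: "outer v *v x = (v \<bullet> x) *\<^sub>R v"
  by (simp add: outer_def vec_eq_iff matrix_vector_mult_def inner_vec_def sum_distrib_left algebra_simps)

lemma outer_transpose: "transpose (outer v) = outer v"
  by (simp add: outer_def transpose_def vec_eq_iff mult.commute)

lemma zero_mv: "(0::real^'n^'m) *v x = 0"
  by (simp add: matrix_vector_mult_def vec_eq_iff)

lemma sqrt_sub:
  fixes M :: "real^'n^'n"
  assumes sym: "transpose M = M" and pd: "\<forall>x. x \<noteq> 0 \<longrightarrow> x \<bullet> (M *v x) > 0"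
  shows "subspace S \<Longrightarrow> (\<forall>x\<in>S. M *v x \<in> S) \<Longrightarrow>
    \<exists>P. transpose P = P \<and> (\<forall>x\<in>S. P *v x \<in> S) \<and> (\<forall>x. (\<forall>y\<in>S. y \<bullet> x = 0) \<longrightarrow> P *v x = 0)
      \<and> (\<forall>x\<in>S. P *v (P *v x) = M *v x) \<and> (\<forall>x\<in>S. x \<noteq> 0 \<longrightarrow> x \<bullet> (P *v x) > 0)"
proof (induction "dim S" arbitrary: S rule: less_induct)
  case less
  note S = less.prems(1) and inv = less.prems(2)
  show ?case
  proof (cases "S = {0}")
    case True
    show ?thesis
      by (rule exI[of _ 0]) (simp add: True zero_mv transpose_def vec_eq_iff)
  next
    case False
    obtain v lam where vS: "v \<in> S" and v0: "v \<noteq> 0" and ev: "M *v v = lam *\<^sub>R v"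
      using eigen_max[OF sym S inv False] by blast
    have vv: "v \<bullet> v > 0" using v0 by simp
    have lpos: "lam > 0"
    proof -
      have "0 < v \<bullet> (M *v v)" using pd v0 by blast
      also have "\<dots> = lam * (v \<bullet> v)" by (simp add: ev)
      finally show ?thesis using vv by (simp add: zero_less_mult_iff)
    qed
    define S' where "S' = {x\<in>S. v \<bullet> x = 0}"
    have S'sub: "subspace S'"
    proof -
      have "S' = S \<inter> {x. v \<bullet> x = 0}" by (auto simp: S'_def)
      then show ?thesis using subspace_inter[OF S subspace_hyperplane[of v]] by simp
    qed
    have S'inv: "\<forall>x\<in>S'. M *v x \<in> S'"
    proof
      fix x assume "x \<in> S'"
      then have "x \<in> S" "v \<bullet> x = 0" by (auto simp: S'_def)
      moreover have "v \<bullet> (M *v x) = (M *v v) \<bullet> x" by (rule sym_dot[OF sym])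
      ultimately show "M *v x \<in> S'" using inv by (simp add: S'_def ev)
    qed
    have "dim S' < dim S"
    proof (rule dim_psubset)
      have "S' \<subseteq> S" by (auto simp: S'_def)
      moreover have "v \<notin> S'" using vv by (auto simp: S'_def)
      ultimately have "S' \<subset> S" using vS by blast
      then show "span S' \<subset> span S" using S S'sub by (metis span_eq_iff)
    qed
    then obtain P' where P'sym: "transpose P' = P'" and P'S: "\<forall>x\<in>S'. P' *v x \<in> S'"
      and P'perp: "\<forall>x. (\<forall>y\<in>S'. y \<bullet> x = 0) \<longrightarrow> P' *v x = 0"
      and P'sq: "\<forall>x\<in>S'. P' *v (P' *v x) = M *v x"
      and P'pos: "\<forall>x\<in>S'. x \<noteq> 0 \<longrightarrow> x \<bullet> (P' *v x) > 0"
      using less.hyps S'sub S'inv by blast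
    have P'v: "P' *v v = 0" using P'perp by (auto simp: S'_def inner_commute)
    define a where "a x = (v \<bullet> x) / (v \<bullet> v)" for x
    have decomp: "x = a x *\<^sub>R v + (x - a x *\<^sub>R v)" for x by simp
    have yS': "x - a x *\<^sub>R v \<in> S'" if "x \<in> S" for x
      using that vS S vv by (simp add: S'_def a_def subspace_diff subspace_scale inner_diff_right)
    have P'x: "P' *v x = P' *v (x - a x *\<^sub>R v)" for x
      by (simp add: matrix_vector_mult_diff_distrib matrix_vector_mult_scaleR P'v)
    have P'S2: "P' *v x \<in> S'" if "x \<in> S" for x using P'S yS'[OF that] P'x[of x] by simp
    define k where "k = sqrt lam / (v \<bullet> v)"
    define P where "P = P' + k *\<^sub>R outer v"
    have Pv: "P *v x = P' *v x + (k * (v \<bullet> x)) *\<^sub>R v" for x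
      by (simp add: P_def matrix_vector_mult_add_rdistrib scaleR_matrix_vector_assoc[symmetric] outer_mv)
    have Psym: "transpose P = P"
      using P'sym outer_transpose[of v]
      by (simp add: P_def transpose_def vec_eq_iff)
    have A: "\<forall>x\<in>S. P *v x \<in> S"
    proof
      fix x assume "x \<in> S"
      then have "P' *v x \<in> S" using P'S2 by (auto simp: S'_def)
      then show "P *v x \<in> S" using S vS by (simp add: Pv subspace_add subspace_scale)
    qed
    have B: "\<forall>x. (\<forall>y\<in>S. y \<bullet> x = 0) \<longrightarrow> P *v x = 0"
    proof (intro allI impI)
      fix x assume h: "\<forall>y\<in>S. y \<bullet> x = 0"
      then have "P' *v x = 0" using P'perp by (auto simp: S'_def)
      moreover have "v \<bullet> x = 0" using h vS by blast
      ultimately show "P *v x = 0" by (simp add: Pv)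
    qed
    have C: "\<forall>x\<in>S. P *v (P *v x) = M *v x"
    proof
      fix x assume xS: "x \<in> S"
      define y where "y = x - a x *\<^sub>R v"
      have y: "y \<in> S'" using yS'[OF xS] by (simp add: y_def)
      have z: "P' *v x \<in> S'" using P'S2[OF xS] .
      have vz: "v \<bullet> (P' *v x) = 0" using z by (simp add: S'_def)
      have "P *v (P *v x) = P' *v (P' *v x) + (k * (v \<bullet> x) * k * (v \<bullet> v)) *\<^sub>R v"
        by (simp add: Pv matrix_vector_right_distrib matrix_vector_mult_scaleR P'v inner_add_right vz)
      also have "P' *v (P' *v x) = M *v y" using P'sq y P'x[of x] by (simp add: y_def)
      also have "k * (v \<bullet> x) * k * (v \<bullet> v) = lam * a x"
      proof -
        have kk: "k * k * (v \<bullet> v) = lam / (v \<bullet> v)"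
          using vv lpos by (simp add: k_def power2_eq_square)
        have "k * (v \<bullet> x) * k * (v \<bullet> v) = (k * k * (v \<bullet> v)) * (v \<bullet> x)" by (simp add: mult_ac)
        then show ?thesis unfolding kk a_def by simp
      qed
      also have "M *v y + (lam * a x) *\<^sub>R v = M *v x"
        by (simp add: y_def matrix_vector_mult_diff_distrib matrix_vector_mult_scaleR ev)
      finally show "P *v (P *v x) = M *v x" .
    qed
    have D: "\<forall>x\<in>S. x \<noteq> 0 \<longrightarrow> x \<bullet> (P *v x) > 0"
    proof (intro ballI impI)
      fix x assume xS: "x \<in> S" and x0: "x \<noteq> 0"
      define y where "y = x - a x *\<^sub>R v"
      have y: "y \<in> S'" using yS'[OF xS] by (simp add: y_def)
      have vz: "v \<bullet> (P' *v y) = 0" using P'S y by (simp add: S'_def)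
      have xe: "x = a x *\<^sub>R v + y" by (simp add: y_def)
      have P'xy: "P' *v x = P' *v y" using P'x[of x] by (simp add: y_def)
      have "x \<bullet> (P' *v x) = (a x *\<^sub>R v + y) \<bullet> (P' *v y)" by (metis P'xy xe)
      also have "\<dots> = y \<bullet> (P' *v y)" using vz by (simp add: inner_add_left)
      finally have xP'x: "x \<bullet> (P' *v x) = y \<bullet> (P' *v y)" .
      have "x \<bullet> (P *v x) = x \<bullet> (P' *v x) + k * (v \<bullet> x) * (x \<bullet> v)" by (simp add: Pv inner_add_right)
      then have eq: "x \<bullet> (P *v x) = y \<bullet> (P' *v y) + k * (v \<bullet> x)^2"
        by (simp add: xP'x inner_commute[of x v] power2_eq_square)
      have kpos: "k > 0" using lpos vv by (simp add: k_def)
      show "x \<bullet> (P *v x) > 0"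
      proof (cases "y = 0")
        case True
        then have "x = a x *\<^sub>R v" using xe by simp
        then have "a x \<noteq> 0" using x0 by auto
        then have "v \<bullet> x \<noteq> 0" by (simp add: a_def)
        then show ?thesis using eq True kpos by simp
      next
        case False
        then have "y \<bullet> (P' *v y) > 0" using P'pos y by blast
        then show ?thesis using eq kpos by (simp add: add_pos_nonneg)
      qed
    qed
    show ?thesis using Psym A B C D by blast
  qed
qed



lemma psd_sqrt:
  fixes M :: "real^'n^'n"
  assumes sym: "transpose M = M" and pd: "\<forall>x. x \<noteq> 0 \<longrightarrow> x \<bullet> (M *v x) > 0"
  shows "\<exists>P. transpose P = P \<and> P ** P = M \<and> (\<forall>x. x \<noteq> 0 \<longrightarrow> x \<bullet> (P *v x) > 0)"
proof -
  obtain P where "transpose P = P" "\<forall>x\<in>UNIV. P *v (P *v x) = M *v x"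
     "\<forall>x\<in>UNIV. x \<noteq> 0 \<longrightarrow> x \<bullet> (P *v x) > 0"
    using sqrt_sub[OF sym pd, of UNIV] by auto
  moreover have "P ** P = M" using calculation(2)
    by (simp add: matrix_eq matrix_vector_mul_assoc[symmetric])
  ultimately show ?thesis by blast
qed

lemma sym_form_zero:
  fixes D :: "real^'n^'n"
  assumes sym: "transpose D = D" and z: "\<forall>x. x \<bullet> (D *v x) = 0"
  shows "D = 0"
proof -
  have "y \<bullet> (D *v w) = 0" for y w
  proof -
    have "(y + w) \<bullet> (D *v (y + w)) = y \<bullet> (D *v y) + y \<bullet> (D *v w) + w \<bullet> (D *v y) + w \<bullet> (D *v w)"
      by (simp add: matrix_vector_right_distrib inner_add_left inner_add_right)
    moreover have "w \<bullet> (D *v y) = y \<bullet> (D *v w)"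
      using sym_dot[OF sym, of w y] by (simp add: inner_commute)
    ultimately show ?thesis using z by (metis add.right_neutral add_0 mult_2 mult_eq_0_iff zero_neq_numeral)
  qed
  then have "D *v w = 0" for w by (metis inner_eq_zero_iff)
  then show ?thesis by (simp add: matrix_eq zero_mv)
qed

lemma sqrt_unique_half:
  fixes P Q :: "real^'n^'n"
  assumes sP: "transpose P = P" and sQ: "transpose Q = Q"
    and pP: "\<forall>x. x \<noteq> 0 \<longrightarrow> x \<bullet> (P *v x) > 0" and pQ: "\<forall>x. x \<noteq> 0 \<longrightarrow> x \<bullet> (Q *v x) > 0"
    and eq: "P ** P = Q ** Q"
  shows "x \<bullet> ((P - Q) *v x) \<le> 0"
proof (cases "(UNIV :: (real^'n) set) = {0}")
  case True
  then have "x = 0" by blast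
  then show ?thesis by simp
next
  case False
  define D where "D = P - Q"
  have sD: "transpose D = D" using sP sQ by (simp add: D_def transpose_def vec_eq_iff)
  obtain v \<mu> where v0: "v \<noteq> 0" and ev: "D *v v = \<mu> *\<^sub>R v"
    and bd: "\<forall>x\<in>UNIV. x \<bullet> (D *v x) \<le> \<mu> * (x \<bullet> x)"
    using eigen_max[OF sD subspace_UNIV _ False] by blast
  have key: "P *v (D *v y) + D *v (Q *v y) = 0" for y
  proof -
    have "P *v (P *v y) = Q *v (Q *v y)" using eq by (simp add: matrix_vector_mul_assoc)
    then show ?thesis by (simp add: D_def matrix_vector_mult_diff_rdistrib matrix_vector_mult_diff_distrib)
  qed
  have "0 = v \<bullet> (P *v (D *v v)) + v \<bullet> (D *v (Q *v v))"
    using key[of v] by (metis inner_add_right inner_zero_right)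
  also have "v \<bullet> (D *v (Q *v v)) = (D *v v) \<bullet> (Q *v v)" by (rule sym_dot[OF sD])
  also have "\<dots> = \<mu> * (v \<bullet> (Q *v v))" by (simp add: ev)
  also have "v \<bullet> (P *v (D *v v)) = \<mu> * (v \<bullet> (P *v v))" by (simp add: ev matrix_vector_mult_scaleR)
  finally have "\<mu> * (v \<bullet> (P *v v) + v \<bullet> (Q *v v)) = 0" by (simp add: algebra_simps)
  moreover have "v \<bullet> (P *v v) + v \<bullet> (Q *v v) > 0" using pP pQ v0 by (simp add: add_pos_pos)
  ultimately have "\<mu> = 0" by simp
  then show ?thesis using bd by (simp add: D_def)
qed

lemma sqrt_unique:
  fixes P Q :: "real^'n^'n"
  assumes sP: "transpose P = P" and sQ: "transpose Q = Q"
    and pP: "\<forall>x. x \<noteq> 0 \<longrightarrow> x \<bullet> (P *v x) > 0" and pQ: "\<forall>x. x \<noteq> 0 \<longrightarrow> x \<bullet> (Q *v x) > 0"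
    and eq: "P ** P = Q ** Q"
  shows "P = Q"
proof -
  have sD: "transpose (P - Q) = P - Q" using sP sQ by (simp add: transpose_def vec_eq_iff)
  have "x \<bullet> ((P - Q) *v x) = 0" for x
  proof -
    have "x \<bullet> ((P - Q) *v x) \<le> 0" by (rule sqrt_unique_half[OF sP sQ pP pQ eq])
    moreover have "x \<bullet> ((Q - P) *v x) \<le> 0" by (rule sqrt_unique_half[OF sQ sP pQ pP eq[symmetric]])
    moreover have "x \<bullet> ((Q - P) *v x) = - (x \<bullet> ((P - Q) *v x))"
      by (simp add: matrix_vector_mult_diff_rdistrib inner_diff_right)
    ultimately show ?thesis by linarith
  qed
  then have "P - Q = 0" using sym_form_zero[OF sD] by blast
  then show ?thesis by simp
qed



lemma minv:
  fixes A :: "real^'n^'n"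
  assumes "invertible A"
  shows "A ** matrix_inv A = mat 1" "matrix_inv A ** A = mat 1"
proof -
  have "\<exists>A'. A ** A' = mat 1 \<and> A' ** A = mat 1" using assms by (simp add: invertible_def)
  then have "A ** matrix_inv A = mat 1 \<and> matrix_inv A ** A = mat 1"
    unfolding matrix_inv_def by (rule someI_ex)
  then show "A ** matrix_inv A = mat 1" "matrix_inv A ** A = mat 1" by auto
qed

lemma minv_unique:
  fixes A B :: "real^'n^'n"
  assumes "A ** B = mat 1"
  shows "matrix_inv A = B"
proof -
  have inv: "invertible A" using assms invertible_right_inverse by blast
  have "matrix_inv A = matrix_inv A ** (A ** B)" by (simp add: assms)
  also have "\<dots> = B" by (simp add: matrix_mul_assoc minv(2)[OF inv])
  finally show ?thesis .
qed

lemma orth_inv: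
  fixes Q :: "real^'n^'n"
  assumes "orthogonal_matrix Q"
  shows "invertible Q" "matrix_inv Q = transpose Q"
  using assms unfolding orthogonal_matrix_def invertible_def
  by (auto intro: minv_unique)

lemma minv_mult:
  fixes A B :: "real^'n^'n"
  assumes "invertible A" "invertible B"
  shows "matrix_inv (A ** B) = matrix_inv B ** matrix_inv A"
proof (rule minv_unique)
  have "A ** B ** (matrix_inv B ** matrix_inv A) = A ** (B ** matrix_inv B) ** matrix_inv A"
    by (simp add: matrix_mul_assoc)
  then show "A ** B ** (matrix_inv B ** matrix_inv A) = mat 1"
    using minv(1)[OF assms(1)] minv(1)[OF assms(2)] by simp
qed

lemma transpose_dot: "x \<bullet> (transpose A *v y) = (A *v x) \<bullet> (y::real^'n)"
  by (metis dot_lmul_matrix inner_commute transpose_matrix_vector)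

lemma hol_orth:
  assumes "crystallographic \<pi>" "H \<in> holonomy \<pi>"
  shows "orthogonal_matrix H"
  using assms unfolding crystallographic_def iso_subgroup_def holonomy_def Iso_def by auto

lemma pd_inv:
  fixes P :: "real^'n^'n"
  assumes "\<forall>x. x \<noteq> 0 \<longrightarrow> x \<bullet> (P *v x) > 0"
  shows "invertible P"
proof -
  have "\<forall>x. P *v x = 0 \<longrightarrow> x = 0" using assms by (metis inner_zero_right less_irrefl)
  then show ?thesis using matrix_left_invertible_ker invertible_left_inverse by blast
qed

theorem mainTheorem10:
  fixes \<pi> :: "'n::finite iso set"
  assumes "crystallographic \<pi>"
  shows "conj_orth \<pi> =
    {Q ** P | Q P. orthogonal_matrix Q \<and> P \<in> GL_centralizer (holonomy \<pi>)}"
proof (intro equalityI subsetI)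
  fix A assume "A \<in> {Q ** P | Q P. orthogonal_matrix Q \<and> P \<in> GL_centralizer (holonomy \<pi>)}"
  then obtain Q P where A: "A = Q ** P" and Q: "orthogonal_matrix Q" and P: "invertible P"
    and Pc: "\<forall>H\<in>holonomy \<pi>. P ** H = H ** P"
    unfolding GL_centralizer_def by blast
  have invA: "invertible A" using A Q P orth_inv invertible_mult by blast
  have mA: "matrix_inv A = matrix_inv P ** transpose Q"
    using A minv_mult[OF orth_inv(1)[OF Q] P] orth_inv(2)[OF Q] by simp
  have "orthogonal_matrix (A ** H ** matrix_inv A)" if H: "H \<in> holonomy \<pi>" for H
  proof -
    have "A ** H ** matrix_inv A = A ** H ** (matrix_inv P ** transpose Q)"
      by (simp only: mA)
    also have "\<dots> = Q ** (P ** H) ** matrix_inv P ** transpose Q"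
      by (simp add: A matrix_mul_assoc)
    also have "\<dots> = Q ** H ** (P ** matrix_inv P) ** transpose Q"
      using Pc H by (simp add: matrix_mul_assoc)
    also have "\<dots> = Q ** H ** transpose Q" using minv(1)[OF P] by simp
    finally show ?thesis
      using Q hol_orth[OF assms H] by (simp add: orthogonal_matrix_mul)
  qed
  then show "A \<in> conj_orth \<pi>" using invA by (simp add: conj_orth_def)
next
  fix A assume "A \<in> conj_orth \<pi>"
  then have invA: "invertible A" and orthc: "\<forall>H\<in>holonomy \<pi>. orthogonal_matrix (A ** H ** matrix_inv A)"
    by (auto simp: conj_orth_def)
  define M where "M = transpose A ** A"
  have sM: "transpose M = M" by (simp add: M_def matrix_transpose_mul)
  have pM: "\<forall>x. x \<noteq> 0 \<longrightarrow> x \<bullet> (M *v x) > 0"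
  proof (intro allI impI)
    fix x :: "real^'n" assume "x \<noteq> 0"
    then have "A *v x \<noteq> 0" using inj_matrix_vector_mult[OF invA] by (metis injD matrix_vector_mult_0_right)
    moreover have "x \<bullet> (M *v x) = (A *v x) \<bullet> (A *v x)"
      unfolding M_def matrix_vector_mul_assoc[symmetric] by (rule transpose_dot)
    ultimately show "x \<bullet> (M *v x) > 0" by simp
  qed
  obtain P where sP: "transpose P = P" and PP: "P ** P = M" and pP: "\<forall>x. x \<noteq> 0 \<longrightarrow> x \<bullet> (P *v x) > 0"
    using psd_sqrt[OF sM pM] by blast
  have invP: "invertible P" using pd_inv[OF pP] .
  define Pi where "Pi = matrix_inv P"
  have PPi: "P ** Pi = mat 1" and PiP: "Pi ** P = mat 1" using minv[OF invP] by (auto simp: Pi_def)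
  have tPi: "transpose Pi = Pi"
  proof -
    have "transpose (P ** Pi) = mat 1" using PPi by simp
    then have "transpose Pi ** P = mat 1" by (simp add: matrix_transpose_mul sP)
    then have "transpose Pi = transpose Pi ** (P ** Pi)" using PPi by simp
    also have "\<dots> = Pi" by (simp add: matrix_mul_assoc \<open>transpose Pi ** P = mat 1\<close>)
    finally show ?thesis .
  qed
  define Q where "Q = A ** Pi"
  have QP: "Q ** P = A" by (simp add: Q_def matrix_mul_assoc[symmetric] PiP)
  have oQ: "orthogonal_matrix Q"
  proof -
    have "transpose Q ** Q = Pi ** (transpose A ** A) ** Pi"
      by (simp add: Q_def matrix_transpose_mul tPi matrix_mul_assoc)
    also have "\<dots> = Pi ** (P ** P) ** Pi" by (simp add: PP M_def)
    also have "\<dots> = (Pi ** P) ** (P ** Pi)" by (simp add: matrix_mul_assoc)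
    also have "\<dots> = mat 1" by (simp add: PPi PiP)
    finally show ?thesis by (simp add: orthogonal_matrix)
  qed
  have comm: "P ** H = H ** P" if H: "H \<in> holonomy \<pi>" for H
  proof -
    have oH: "orthogonal_matrix H" using hol_orth[OF assms H] .
    have HH: "transpose H ** H = mat 1" "H ** transpose H = mat 1"
      using oH by (auto simp: orthogonal_matrix_def)
    define Ai where "Ai = matrix_inv A"
    have AAi: "A ** Ai = mat 1" and AiA: "Ai ** A = mat 1" using minv[OF invA] by (auto simp: Ai_def)
    have tAAi: "transpose A ** transpose Ai = mat 1"
      using AiA by (metis matrix_transpose_mul transpose_mat)
    have "orthogonal_matrix (A ** H ** Ai)" using orthc H by (simp add: Ai_def)
    then have "transpose (A ** H ** Ai) ** (A ** H ** Ai) = mat 1" by (simp add: orthogonal_matrix)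
    then have B: "transpose Ai ** (transpose H ** M ** H) ** Ai = mat 1"
      by (simp add: matrix_transpose_mul M_def matrix_mul_assoc)
    define X where "X = transpose H ** M ** H"
    have "transpose A ** (transpose Ai ** X ** Ai) ** A = (transpose A ** transpose Ai) ** X ** (Ai ** A)"
      by (simp add: matrix_mul_assoc)
    also have "\<dots> = X" by (simp add: tAAi AiA)
    finally have "X = transpose A ** (transpose Ai ** X ** Ai) ** A" by simp
    also have "\<dots> = M" using B by (simp add: X_def M_def)
    finally have HMH: "transpose H ** M ** H = M" by (simp add: X_def)
    define R where "R = transpose H ** P ** H"
    have sR: "transpose R = R" by (simp add: R_def matrix_transpose_mul sP matrix_mul_assoc)
    have pR: "\<forall>x. x \<noteq> 0 \<longrightarrow> x \<bullet> (R *v x) > 0"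
    proof (intro allI impI)
      fix x :: "real^'n" assume x0: "x \<noteq> 0"
      have "H *v x \<noteq> 0" using x0 HH(1)
        by (metis matrix_vector_mul_assoc matrix_vector_mul_lid matrix_vector_mult_0_right)
      then have "(H *v x) \<bullet> (P *v (H *v x)) > 0" using pP by blast
      moreover have "x \<bullet> (R *v x) = (H *v x) \<bullet> (P *v (H *v x))"
        unfolding R_def matrix_vector_mul_assoc[symmetric] by (rule transpose_dot)
      ultimately show "x \<bullet> (R *v x) > 0" by simp
    qed
    have "R ** R = transpose H ** P ** (H ** transpose H) ** P ** H"
      by (simp add: R_def matrix_mul_assoc)
    also have "\<dots> = transpose H ** M ** H" by (simp add: HH PP[symmetric] matrix_mul_assoc)
    also have "\<dots> = P ** P" by (simp add: HMH PP)
    finally have "R = P" using sqrt_unique[OF sR sP pR pP] by blast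
    have "P ** H = (H ** transpose H) ** P ** H" by (simp add: HH)
    also have "\<dots> = H ** R" by (simp add: R_def matrix_mul_assoc)
    also have "\<dots> = H ** P" by (simp add: \<open>R = P\<close>)
    finally show ?thesis .
  qed
  have "P \<in> GL_centralizer (holonomy \<pi>)" using invP comm by (simp add: GL_centralizer_def)
  then show "A \<in> {Q ** P | Q P. orthogonal_matrix Q \<and> P \<in> GL_centralizer (holonomy \<pi>)}"
    using QP oQ by blast
qed

end
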